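(* Let $F$ be an algebraically closed field, $l>1$ an integer coprime to the characteristic of $F$, $\xi\in F$ a primitive $l$-th root of $1$, $m\ge1$, and $$Clg(l,m)=\langle x_1,\ldots,x_m \mid x_i^l=1;\ x_i^{-1}x_jx_i=\xi x_j \ (i<j);\ x_i^{-1}x_jx_i=\xi^{-1}x_j \ (i>j)\rangle.$$ Let $V$ be a subspace of $Clg(l,m)$ that is invariant under every automorphism of $Clg(l,m)$. Then $V$ is spanned by the ordered monomials $x_1^{k_1}\cdots x_m^{k_m}$ ($0\le k_i\le l-1$) that lie in $V$.
   Context: The ordered monomials $x_1^{k_1}x_2^{k_2}\cdots x_m^{k_m}$ with $0\le k_i\le l-1$ are the standard monomials of $Clg(l,m)$ (they form a basis of it). *)

theory Defs
  imports "HOL-Computational_Algebra.Polynomial"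
begin

text \<open>Concrete model of the generalized Clifford algebra Clg(l,m) over a field 'a.
  Generators are indexed 0..m-1 (instead of 1..m). An element is a coefficient function on
  exponent vectors k :: nat \<Rightarrow> nat with k i < l for i < m and k i = 0 for i \<ge> m;
  the function at k is the coefficient of the ordered monomial x_0^(k 0) ... x_(m-1)^(k (m-1)).
  From the relations x_j x_i = xi x_i x_j (i < j) and x_i^l = 1 one gets
  x^a x^b = xi^(sum over i<j of a_j b_i) x^((a+b) mod l).\<close>

definition clg_idx :: "nat \<Rightarrow> nat \<Rightarrow> (nat \<Rightarrow> nat) set" where
  "clg_idx l m = {k. (\<forall>i<m. k i < l) \<and> (\<forall>i\<ge>m. k i = 0)}"

definition clg_carrier :: "nat \<Rightarrow> nat \<Rightarrow> ((nat \<Rightarrow> nat) \<Rightarrow> 'a::field) set" where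
  "clg_carrier l m = {f. \<forall>k. k \<notin> clg_idx l m \<longrightarrow> f k = 0}"

definition clg_mono :: "(nat \<Rightarrow> nat) \<Rightarrow> ((nat \<Rightarrow> nat) \<Rightarrow> 'a::field)" where
  "clg_mono k = (\<lambda>c. if c = k then 1 else 0)"

definition clg_one :: "(nat \<Rightarrow> nat) \<Rightarrow> 'a::field" where
  "clg_one = clg_mono (\<lambda>_. 0)"

definition clg_add :: "((nat \<Rightarrow> nat) \<Rightarrow> 'a::field) \<Rightarrow> ((nat \<Rightarrow> nat) \<Rightarrow> 'a) \<Rightarrow> ((nat \<Rightarrow> nat) \<Rightarrow> 'a)" where
  "clg_add f g = (\<lambda>k. f k + g k)"

definition clg_smult :: "'a::field \<Rightarrow> ((nat \<Rightarrow> nat) \<Rightarrow> 'a) \<Rightarrow> ((nat \<Rightarrow> nat) \<Rightarrow> 'a)" where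
  "clg_smult c f = (\<lambda>k. c * f k)"

definition clg_mult :: "nat \<Rightarrow> nat \<Rightarrow> 'a::field \<Rightarrow>
    ((nat \<Rightarrow> nat) \<Rightarrow> 'a) \<Rightarrow> ((nat \<Rightarrow> nat) \<Rightarrow> 'a) \<Rightarrow> ((nat \<Rightarrow> nat) \<Rightarrow> 'a)" where
  "clg_mult l m \<xi> f g = (\<lambda>c. if c \<in> clg_idx l m then
      (\<Sum>a\<in>clg_idx l m. \<Sum>b\<in>clg_idx l m.
         if (\<forall>i. c i = (a i + b i) mod l)
         then \<xi> ^ (\<Sum>i<m. \<Sum>j<m. if i < j then a j * b i else 0) * f a * g b
         else 0)
      else 0)"

definition clg_aut :: "nat \<Rightarrow> nat \<Rightarrow> 'a::field \<Rightarrow>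
    (((nat \<Rightarrow> nat) \<Rightarrow> 'a) \<Rightarrow> ((nat \<Rightarrow> nat) \<Rightarrow> 'a)) \<Rightarrow> bool" where
  "clg_aut l m \<xi> \<phi> \<longleftrightarrow>
     bij_betw \<phi> (clg_carrier l m) (clg_carrier l m) \<and>
     (\<forall>f\<in>clg_carrier l m. \<forall>g\<in>clg_carrier l m. \<phi> (clg_add f g) = clg_add (\<phi> f) (\<phi> g)) \<and>
     (\<forall>c. \<forall>f\<in>clg_carrier l m. \<phi> (clg_smult c f) = clg_smult c (\<phi> f)) \<and>
     (\<forall>f\<in>clg_carrier l m. \<forall>g\<in>clg_carrier l m.
        \<phi> (clg_mult l m \<xi> f g) = clg_mult l m \<xi> (\<phi> f) (\<phi> g)) \<and>
     \<phi> clg_one = clg_one"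

definition clg_subspace :: "nat \<Rightarrow> nat \<Rightarrow> ((nat \<Rightarrow> nat) \<Rightarrow> 'a::field) set \<Rightarrow> bool" where
  "clg_subspace l m V \<longleftrightarrow> V \<subseteq> clg_carrier l m \<and> (\<lambda>_. 0) \<in> V \<and>
     (\<forall>f\<in>V. \<forall>g\<in>V. clg_add f g \<in> V) \<and> (\<forall>c. \<forall>f\<in>V. clg_smult c f \<in> V)"

definition clg_span :: "((nat \<Rightarrow> nat) \<Rightarrow> 'a::field) set \<Rightarrow> ((nat \<Rightarrow> nat) \<Rightarrow> 'a) set" where
  "clg_span S = {f. \<exists>T c. finite T \<and> T \<subseteq> S \<and> f = (\<lambda>k. \<Sum>s\<in>T. c s * s k)}"

definition alg_closed_field :: "'a::field itself \<Rightarrow> bool" where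
  "alg_closed_field _ \<longleftrightarrow> (\<forall>p :: 'a poly. degree p > 0 \<longrightarrow> (\<exists>x. poly p x = 0))"

definition primitive_root :: "nat \<Rightarrow> 'a::field \<Rightarrow> bool" where
  "primitive_root l \<xi> \<longleftrightarrow> \<xi> ^ l = 1 \<and> (\<forall>k. 0 < k \<and> k < l \<longrightarrow> \<xi> ^ k \<noteq> 1)"

end

theory Submission
  imports Defs
begin

definition sig :: "'a::field \<Rightarrow> nat \<Rightarrow> ((nat \<Rightarrow> nat) \<Rightarrow> 'a) \<Rightarrow> ((nat \<Rightarrow> nat) \<Rightarrow> 'a)" where
  "sig \<xi> i f = (\<lambda>k. \<xi> ^ (k i) * f k)"

lemma pow_mod_l:
  fixes \<xi> :: "'a::field"
  assumes "\<xi> ^ l = 1"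
  shows "\<xi> ^ (n mod l) = \<xi> ^ n"
proof -
  have "\<xi> ^ n = \<xi> ^ (l * (n div l) + n mod l)" by (simp only: mult_div_mod_eq)
  also have "\<dots> = \<xi> ^ (n mod l)" by (simp only: power_add power_mult assms power_one mult_1)
  finally show ?thesis by (rule sym)
qed

lemma finite_idx: "finite (clg_idx l m)"
proof -
  have "clg_idx l m = {f. \<forall>x. (x \<in> {..<m} \<longrightarrow> f x \<in> {..<l}) \<and> (x \<notin> {..<m} \<longrightarrow> f x = 0)}"
    unfolding clg_idx_def by auto
  then show ?thesis using finite_set_of_finite_funs[of "{..<m}" "{..<l}" 0] by simp
qed

lemma sig_aut:
  fixes \<xi> :: "'a::field"
  assumes xl: "\<xi> ^ l = 1" and lp: "l > 0"
  shows "clg_aut l m \<xi> (sig \<xi> i)"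
proof -
  have car: "sig \<xi> i f \<in> clg_carrier l m" if "f \<in> clg_carrier l m" for f :: "(nat \<Rightarrow> nat) \<Rightarrow> 'a" and \<xi>
    using that by (simp add: clg_carrier_def sig_def)
  have inv: "sig \<xi> i (sig (\<xi> ^ (l - 1)) i f) = f" "sig (\<xi> ^ (l - 1)) i (sig \<xi> i f) = f"
    for f :: "(nat \<Rightarrow> nat) \<Rightarrow> 'a"
  proof -
    have "\<xi> ^ (k i) * ((\<xi> ^ (l - 1)) ^ (k i) * f k) = f k" for k
    proof -
      have False: "l \<noteq> 0" using lp by simp
      have "\<xi> ^ (k i) * (\<xi> ^ (l - 1)) ^ (k i) = (\<xi> * \<xi> ^ (l - 1)) ^ (k i)"
        by (simp add: power_mult_distrib)
      also have "\<xi> * \<xi> ^ (l - 1) = \<xi> ^ l" using False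
        by (metis One_nat_def Suc_pred neq0_conv power_Suc)
      finally show ?thesis using xl by (simp add: mult.assoc[symmetric])
    qed
    then show "sig \<xi> i (sig (\<xi> ^ (l - 1)) i f) = f" "sig (\<xi> ^ (l - 1)) i (sig \<xi> i f) = f"
      by (auto simp: sig_def mult.assoc mult.left_commute)
  qed
  have bij: "bij_betw (sig \<xi> i) (clg_carrier l m) (clg_carrier l m)"
    by (rule bij_betw_byWitness[where f'="sig (\<xi> ^ (l - 1)) i"]) (auto simp: inv[simplified] car)
  have mult: "sig \<xi> i (clg_mult l m \<xi> f g) = clg_mult l m \<xi> (sig \<xi> i f) (sig \<xi> i g)" for f g
  proof
    fix c
    show "sig \<xi> i (clg_mult l m \<xi> f g) c = clg_mult l m \<xi> (sig \<xi> i f) (sig \<xi> i g) c"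
    proof (cases "c \<in> clg_idx l m")
      case False then show ?thesis by (simp add: sig_def clg_mult_def)
    next
      case True
      have eq: "\<xi> ^ (c i) * (if (\<forall>i. c i = (a i + b i) mod l)
         then \<xi> ^ (\<Sum>i<m. \<Sum>j<m. if i < j then a j * b i else 0) * f a * g b else 0)
        = (if (\<forall>i. c i = (a i + b i) mod l)
         then \<xi> ^ (\<Sum>i<m. \<Sum>j<m. if i < j then a j * b i else 0) * (\<xi> ^ (a i) * f a) * (\<xi> ^ (b i) * g b) else 0)"
        for a b
      proof (cases "\<forall>i. c i = (a i + b i) mod l")
        case True
        then have "\<xi> ^ (c i) = \<xi> ^ (a i) * \<xi> ^ (b i)"
          using pow_mod_l[OF xl, of "a i + b i"] by (simp add: power_add)
        then show ?thesis using True by (simp add: algebra_simps)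
      next
        case False
        show ?thesis by (simp only: if_not_P[OF False] mult_zero_right)
      qed
      show ?thesis using True
        by (simp add: sig_def clg_mult_def sum_distrib_left eq)
    qed
  qed
  have add: "sig \<xi> i (clg_add f g) = clg_add (sig \<xi> i f) (sig \<xi> i g)" for f g
    by (simp add: sig_def clg_add_def algebra_simps)
  have sm: "sig \<xi> i (clg_smult c f) = clg_smult c (sig \<xi> i f)" for c f
    by (simp add: sig_def clg_smult_def algebra_simps)
  have one: "sig \<xi> i clg_one = clg_one"
    by (simp add: sig_def clg_one_def clg_mono_def fun_eq_iff)
  show ?thesis unfolding clg_aut_def using bij mult add sm one by blast
qed

lemma pow_inj:
  fixes \<xi> :: "'a::field"
  assumes "primitive_root l \<xi>" "a < l" "b < l" "a \<noteq> b"
  shows "\<xi> ^ a \<noteq> \<xi> ^ b"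
proof -
  have nz: "\<xi> \<noteq> 0" using assms unfolding primitive_root_def
    by (metis assms(2) not_less_zero power_0_left zero_neq_one)
  have *: "\<xi> ^ a \<noteq> \<xi> ^ b" if "a < b" "b < l" for a b
  proof
    assume e: "\<xi> ^ a = \<xi> ^ b"
    have "\<xi> ^ b = \<xi> ^ a * \<xi> ^ (b - a)" using that by (simp add: power_add[symmetric])
    then have "\<xi> ^ (b - a) = 1" using e nz by simp
    moreover have "0 < b - a" "b - a < l" using that by auto
    ultimately show False using assms(1) unfolding primitive_root_def by blast
  qed
  show ?thesis using assms * by (metis nat_neq_iff)
qed

lemma key:
  fixes \<xi> :: "'a::field"
  assumes pr: "primitive_root l \<xi>" and lp: "l > 0"
    and sub: "clg_subspace l m V"
    and inv: "\<And>\<phi>. clg_aut l m \<xi> \<phi> \<Longrightarrow> \<phi> ` V \<subseteq> V"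
  shows "f \<in> V \<Longrightarrow> k0 \<in> clg_idx l m \<Longrightarrow> f k0 \<noteq> 0 \<Longrightarrow> clg_mono k0 \<in> V"
proof (induction "card {k \<in> clg_idx l m. f k \<noteq> 0}" arbitrary: f rule: less_induct)
  case less
  let ?S = "{k \<in> clg_idx l m. f k \<noteq> 0}"
  have finS: "finite ?S" using finite_idx by simp
  have xl: "\<xi> ^ l = 1" using pr by (simp add: primitive_root_def)
  have fc: "f \<in> clg_carrier l m" using sub less.prems by (auto simp: clg_subspace_def)
  have sadd: "clg_add a b \<in> V" if "a \<in> V" "b \<in> V" for a b
    using sub that unfolding clg_subspace_def by blast
  have ssm: "clg_smult c a \<in> V" if "a \<in> V" for a c
    using sub that unfolding clg_subspace_def by blast
  show ?case
  proof (cases "?S = {k0}")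
    case S1: True
    have fk: "f k = f k0 * clg_mono k0 k" for k
    proof (cases "k = k0")
      case True then show ?thesis by (simp add: clg_mono_def)
    next
      case False
      then have "k \<notin> ?S" using S1 by blast
      then have "f k = 0" using fc unfolding clg_carrier_def by blast
      then show ?thesis using False by (simp add: clg_mono_def)
    qed
    have "clg_mono k0 = clg_smult (inverse (f k0)) f"
    proof
      fix k show "clg_mono k0 k = clg_smult (inverse (f k0)) f k"
        using fk[of k] less.prems(3) by (simp add: clg_smult_def)
    qed
    then show ?thesis using ssm[OF less.prems(1)] by simp
  next
    case False
    then obtain k1 where k1: "k1 \<in> ?S" "k1 \<noteq> k0" using less.prems by blast
    have "\<exists>i. k0 i \<noteq> k1 i"
    proof (rule ccontr)
      assume "\<not> (\<exists>i. k0 i \<noteq> k1 i)"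
      then have "k0 = k1" by (simp add: fun_eq_iff)
      then show False using k1(2) by simp
    qed
    then obtain i where i: "k0 i \<noteq> k1 i" by blast
    have k0i: "k0 \<in> clg_idx l m" using less.prems(2) .
    have k1i: "k1 \<in> clg_idx l m" using k1(1) by simp
    have im: "i < m"
    proof (rule ccontr)
      assume "\<not> i < m"
      then have "k0 i = 0" "k1 i = 0" using k0i k1i unfolding clg_idx_def by auto
      then show False using i by simp
    qed
    have il: "k0 i < l" "k1 i < l" using im k0i k1i unfolding clg_idx_def by auto
    have ne: "\<xi> ^ (k0 i) - \<xi> ^ (k1 i) \<noteq> 0" using pow_inj[OF pr il i] by simp
    define g where "g = clg_add (sig \<xi> i f) (clg_smult (- (\<xi> ^ (k1 i))) f)"
    have gk: "g k = (\<xi> ^ (k i) - \<xi> ^ (k1 i)) * f k" for k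
      by (simp add: g_def clg_add_def clg_smult_def sig_def algebra_simps)
    have "sig \<xi> i f \<in> (sig \<xi> i) ` V" using less.prems(1) by (rule imageI)
    then have "sig \<xi> i f \<in> V" using inv[OF sig_aut[OF xl lp]] by (rule subsetD[rotated])
    then have gV: "g \<in> V" unfolding g_def by (intro sadd ssm less.prems(1))
    have sub1: "{k \<in> clg_idx l m. g k \<noteq> 0} \<subseteq> ?S" by (auto simp: gk)
    have "k1 \<notin> {k \<in> clg_idx l m. g k \<noteq> 0}" by (simp add: gk)
    then have "{k \<in> clg_idx l m. g k \<noteq> 0} \<subset> ?S" using sub1 k1(1) by blast
    then have lt: "card {k \<in> clg_idx l m. g k \<noteq> 0} < card ?S"
      using finS by (rule psubset_card_mono[rotated])
    have g0: "g k0 \<noteq> 0" using ne less.prems(3) by (simp add: gk)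
    show ?thesis by (rule less.hyps[OF lt gV less.prems(2) g0])
  qed
qed

lemma span_sub:
  fixes V :: "((nat \<Rightarrow> nat) \<Rightarrow> 'a::field) set" and c :: "((nat \<Rightarrow> nat) \<Rightarrow> 'a) \<Rightarrow> 'a"
  assumes sub: "clg_subspace l m V"
  shows "finite T \<Longrightarrow> T \<subseteq> V \<Longrightarrow> (\<lambda>k. \<Sum>s\<in>T. c s * s k) \<in> V"
proof (induction T rule: finite_induct)
  case empty then show ?case using sub by (simp add: clg_subspace_def)
next
  case (insert x F)
  have "(\<lambda>k. \<Sum>s\<in>insert x F. c s * s k) = clg_add (clg_smult (c x) x) (\<lambda>k. \<Sum>s\<in>F. c s * s k)"
    using insert by (simp add: clg_add_def clg_smult_def)
  then show ?case using insert sub unfolding clg_subspace_def by auto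
qed

lemma mono_inj: "inj (clg_mono :: (nat \<Rightarrow> nat) \<Rightarrow> (nat \<Rightarrow> nat) \<Rightarrow> 'a::field)"
proof
  fix x y :: "nat \<Rightarrow> nat"
  assume "(clg_mono x :: (nat \<Rightarrow> nat) \<Rightarrow> 'a) = clg_mono y"
  then have "(clg_mono x :: (nat \<Rightarrow> nat) \<Rightarrow> 'a) x = clg_mono y x" by simp
  then show "x = y" by (simp add: clg_mono_def split: if_splits)
qed

theorem lemma2:
  fixes \<xi> :: "'a::field" and l m :: nat and V :: "((nat \<Rightarrow> nat) \<Rightarrow> 'a) set"
  assumes "alg_closed_field TYPE('a)"
    and "l > 1"
    and "CHAR('a) = 0 \<or> coprime l CHAR('a)"
    and "primitive_root l \<xi>"
    and "m \<ge> 1"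
    and "clg_subspace l m V"
    and "\<And>\<phi>. clg_aut l m \<xi> \<phi> \<Longrightarrow> \<phi> ` V \<subseteq> V"
  shows "V = clg_span (clg_mono ` {k \<in> clg_idx l m. clg_mono k \<in> V})"
proof
  show "clg_span (clg_mono ` {k \<in> clg_idx l m. clg_mono k \<in> V}) \<subseteq> V"
    unfolding clg_span_def using span_sub[OF assms(6)] by blast
next
  show "V \<subseteq> clg_span (clg_mono ` {k \<in> clg_idx l m. clg_mono k \<in> V})"
  proof
    fix f assume fV: "f \<in> V"
    have fc: "f \<in> clg_carrier l m" using assms(6) fV by (auto simp: clg_subspace_def)
    define S where "S = {k \<in> clg_idx l m. f k \<noteq> 0}"
    have finS: "finite S" using finite_idx S_def by simp
    have Ssub: "S \<subseteq> {k \<in> clg_idx l m. clg_mono k \<in> V}"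
      using key[OF assms(4) _ assms(6,7) fV] assms(2) S_def by auto
    define c :: "((nat \<Rightarrow> nat) \<Rightarrow> 'a) \<Rightarrow> 'a" where "c = (\<lambda>s. f (inv clg_mono s))"
    have "(\<lambda>k. \<Sum>s\<in>clg_mono ` S. c s * s k) = (\<lambda>k. \<Sum>j\<in>S. f j * clg_mono j k)"
      by (simp add: sum.reindex[OF inj_on_subset[OF mono_inj]] c_def inv_f_f[OF mono_inj])
    also have "\<dots> = f"
    proof
      fix k
      have "(\<Sum>j\<in>S. f j * clg_mono j k) = (\<Sum>j\<in>S. if j = k then f k else 0)"
        by (rule sum.cong) (auto simp: clg_mono_def)
      also have "\<dots> = f k" using finS fc
        by (auto simp: S_def clg_carrier_def)
      finally show "(\<Sum>j\<in>S. f j * clg_mono j k) = f k" .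
    qed
    finally have "f = (\<lambda>k. \<Sum>s\<in>clg_mono ` S. c s * s k)" by simp
    then show "f \<in> clg_span (clg_mono ` {k \<in> clg_idx l m. clg_mono k \<in> V})"
      unfolding clg_span_def using finS Ssub by blast
  qed
qed

end
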